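(* Let the operator matrix $T^\circ$ (as in the context) be essentially self-adjoint, with $T^\circ_{11}$ bounded below and $T^\circ_{22}$ bounded above, and suppose at least one of the following holds: (1) $T^\circ_{22}$ is essentially self-adjoint and for some $\gamma,\varkappa\in\mathbb R$, $\|T^\circ_{21}y\|^2_{\mathfrak H_2}\le\gamma\langle(T^\circ_{11}-\varkappa)y,y\rangle_{\mathfrak H_1}$ for all $y\in\operatorname{dom}T^\circ_{11}$; (2) for some $\gamma,\varkappa,\tau\in\mathbb R$, $\|T^\circ_{21}y\|^2_{\mathfrak H_2}\le\gamma\langle(T^\circ_{11}-\varkappa)y,y\rangle_{\mathfrak H_1}$ for all $y\in\operatorname{dom}T^\circ_{11}$ and $\|T^\circ_{12}y\|^2_{\mathfrak H_1}\le\gamma\langle(\tau-T^\circ_{22})y,y\rangle_{\mathfrak H_2}$ for all $y\in\operatorname{dom}T^\circ_{22}$; (3) $T^\circ_{11}$ and $T^\circ_{22}$ are bounded. Then the closure of $T^\circ$ is its angular extension.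
   Context: Let $\mathfrak H=\mathfrak H_1\oplus\mathfrak H_2$ be an orthogonal sum of Hilbert spaces. Let $T^\circ_{11}\colon\operatorname{dom}T^\circ_{11}\subseteq\mathfrak H_1\to\mathfrak H_1$, $T^\circ_{12}\colon\operatorname{dom}T^\circ_{22}\to\mathfrak H_1$, $T^\circ_{21}\colon\operatorname{dom}T^\circ_{11}\to\mathfrak H_2$, $T^\circ_{22}\colon\operatorname{dom}T^\circ_{22}\subseteq\mathfrak H_2\to\mathfrak H_2$ be linear operators such that $T^\circ=\begin{pmatrix}T^\circ_{11}&T^\circ_{12}\\ T^\circ_{21}&T^\circ_{22}\end{pmatrix}$ with domain $\operatorname{dom}T^\circ_{11}\oplus\operatorname{dom}T^\circ_{22}$ is symmetric, $T^\circ_{11}$ symmetric, $T^\circ_{22}$ symmetric. Angular extension: fix $\varkappa',\tau'\in\mathbb R$ with $\langle(T^\circ_{11}-\varkappa')y,y\rangle_{\mathfrak H_1}\ge\|y\|^2_{\mathfrak H_1}$ on $\operatorname{dom}T^\circ_{11}$ and $\langle(\tau'-T^\circ_{22})y,y\rangle_{\mathfrak H_2}\ge\|y\|^2_{\mathfrak H_2}$ on $\operatorname{dom}T^\circ_{22}$. Let $\mathfrak D_2$ be the completion of $\operatorname{dom}T^\circ_{22}$ in the norm $\langle(\tau'-T^\circ_{22})y,y\rangle^{1/2}_{\mathfrak H_2}$, $T^\bullet_{22}$ the Friedrichs extension of $T^\circ_{22}$ associated with $\mathfrak D_2$, and $\mathfrak D_1$ the completion of $\operatorname{dom}T^\circ_{11}$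 in the norm $\bigl[\langle(T^\circ_{11}-\varkappa')y,y\rangle_{\mathfrak H_1}+\langle(\tau'-T^\bullet_{22})^{-1}T^\circ_{21}y,T^\circ_{21}y\rangle_{\mathfrak H_2}\bigr]^{1/2}$. Let $I_j\colon\mathfrak D_j\to\mathfrak H_j$ be the natural embeddings, $\mathfrak D=\mathfrak D_1\oplus\mathfrak D_2$, $I=I_1\oplus I_2$, $\mathfrak D^*$ the space of bounded antilinear functionals on $\mathfrak D$, $I^*\colon\mathfrak H\to\mathfrak D^*$, $\langle I^*h,y\rangle=\langle h,Iy\rangle_{\mathfrak H}$. The closure of $I^*T^\circ I$ is an everywhere defined bounded operator $T\colon\mathfrak D\to\mathfrak D^*$, and the angular extension of $T^\circ$ is $T^\bullet=(I^* )^{-1}TI^{-1}$, with domain $\{Iy:y\in\mathfrak D,\ Ty\in I^*(\mathfrak H)\}$ and $T^\bullet(Iy)=h$ where $I^*h=Ty$. *)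

theory Defs
  imports "HOL-Analysis.Analysis"
begin

text \<open>Complex Hilbert spaces are modelled as real Hilbert spaces
  (real part of the complex inner product) with an orthogonal complex structure J
  (multiplication by i).\<close>

definition complex_structure :: "('a::real_inner \<Rightarrow> 'a) \<Rightarrow> bool" where
  "complex_structure J \<longleftrightarrow> linear J \<and> (\<forall>x. J (J x) = - x) \<and> (\<forall>x y. inner (J x) (J y) = inner x y)"

definition complex_subspace :: "('a::real_vector \<Rightarrow> 'a) \<Rightarrow> 'a set \<Rightarrow> bool" where
  "complex_subspace J D \<longleftrightarrow> subspace D \<and> (\<forall>x\<in>D. J x \<in> D)"

definition complex_linear_on ::
  "('a::real_vector \<Rightarrow> 'a) \<Rightarrow> ('b::real_vector \<Rightarrow> 'b) \<Rightarrow> 'a set \<Rightarrow> ('a \<Rightarrow> 'b) \<Rightarrow> bool" where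
  "complex_linear_on Ja Jb D T \<longleftrightarrow>
     (\<forall>x\<in>D. \<forall>y\<in>D. T (x + y) = T x + T y) \<and> (\<forall>c. \<forall>x\<in>D. T (c *\<^sub>R x) = c *\<^sub>R T x)
     \<and> (\<forall>x\<in>D. T (Ja x) = Jb (T x))"

definition op_graph :: "'a set \<Rightarrow> ('a \<Rightarrow> 'b) \<Rightarrow> ('a \<times> 'b) set" where
  "op_graph D T = {(x, T x) | x. x \<in> D}"

definition adjoint_graph :: "'a::real_inner set \<Rightarrow> ('a \<Rightarrow> 'b::real_inner) \<Rightarrow> ('b \<times> 'a) set" where
  "adjoint_graph D T = {(u, v). \<forall>x\<in>D. inner (T x) u = inner x v}"

definition symmetric_op :: "'a::real_inner set \<Rightarrow> ('a \<Rightarrow> 'a) \<Rightarrow> bool" where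
  "symmetric_op D T \<longleftrightarrow> closure D = UNIV \<and> (\<forall>x\<in>D. \<forall>y\<in>D. inner (T x) y = inner x (T y))"

text \<open>Essentially self-adjoint: densely defined and the closure equals the adjoint
  (i.e. the closure is self-adjoint, since the adjoint of the closure is the adjoint).\<close>
definition ess_selfadjoint :: "'a::real_inner set \<Rightarrow> ('a \<Rightarrow> 'a) \<Rightarrow> bool" where
  "ess_selfadjoint D T \<longleftrightarrow> closure D = UNIV \<and> closure (op_graph D T) = adjoint_graph D T"

definition bounded_below_op :: "'a::real_inner set \<Rightarrow> ('a \<Rightarrow> 'a) \<Rightarrow> bool" where
  "bounded_below_op D T \<longleftrightarrow> (\<exists>c. \<forall>y\<in>D. c * inner y y \<le> inner (T y) y)"

definition bounded_above_op :: "'a::real_inner set \<Rightarrow> ('a \<Rightarrow> 'a) \<Rightarrow> bool" where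
  "bounded_above_op D T \<longleftrightarrow> (\<exists>c. \<forall>y\<in>D. inner (T y) y \<le> c * inner y y)"

definition bounded_op :: "'a::real_normed_vector set \<Rightarrow> ('a \<Rightarrow> 'b::real_normed_vector) \<Rightarrow> bool" where
  "bounded_op D T \<longleftrightarrow> (\<exists>C. \<forall>y\<in>D. norm (T y) \<le> C * norm y)"

definition block_op ::
  "('a::plus \<Rightarrow> 'a) \<Rightarrow> ('b::plus \<Rightarrow> 'a) \<Rightarrow> ('a \<Rightarrow> 'b) \<Rightarrow> ('b \<Rightarrow> 'b) \<Rightarrow> 'a \<times> 'b \<Rightarrow> 'a \<times> 'b" where
  "block_op T11 T12 T21 T22 p = (T11 (fst p) + T12 (snd p), T21 (fst p) + T22 (snd p))"

text \<open>Sequences in D that are Cauchy for the norm sqrt(q); they represent the elements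
  of the completion of D with respect to this norm.\<close>
definition form_cauchy :: "('a::real_vector \<Rightarrow> real) \<Rightarrow> 'a set \<Rightarrow> (nat \<Rightarrow> 'a) \<Rightarrow> bool" where
  "form_cauchy q D x \<longleftrightarrow> (\<forall>n. x n \<in> D) \<and> (\<forall>e>0. \<exists>N. \<forall>m\<ge>N. \<forall>n\<ge>N. q (x m - x n) < e)"

text \<open>Image of the completion under the natural embedding into the ambient space.\<close>
definition form_completion_image :: "('a::real_normed_vector \<Rightarrow> real) \<Rightarrow> 'a set \<Rightarrow> 'a set" where
  "form_completion_image q D = {w. \<exists>x. form_cauchy q D x \<and> x \<longlonglongrightarrow> w}"

text \<open>Friedrichs extension of the upper semibounded T (with tau - T \<ge> 1) associated with the
  completion D2: restriction of the adjoint to the form domain.\<close>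
definition friedrichs_graph :: "'b::real_inner set \<Rightarrow> ('b \<Rightarrow> 'b) \<Rightarrow> real \<Rightarrow> ('b \<times> 'b) set" where
  "friedrichs_graph D T \<tau> =
     {(w, v). (w, v) \<in> adjoint_graph D T \<and>
              w \<in> form_completion_image (\<lambda>y. \<tau> * inner y y - inner (T y) y) D}"

definition friedrichs_resolvent :: "'b::real_inner set \<Rightarrow> ('b \<Rightarrow> 'b) \<Rightarrow> real \<Rightarrow> 'b \<Rightarrow> 'b" where
  "friedrichs_resolvent D T \<tau> f = (THE u. \<exists>v. (u, v) \<in> friedrichs_graph D T \<tau> \<and> \<tau> *\<^sub>R u - v = f)"

definition ang_form1 ::
  "('a::real_inner \<Rightarrow> 'a) \<Rightarrow> ('a \<Rightarrow> 'b::real_inner) \<Rightarrow> 'b set \<Rightarrow> ('b \<Rightarrow> 'b) \<Rightarrow> real \<Rightarrow> real \<Rightarrow> 'a \<Rightarrow> real" where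
  "ang_form1 T11 T21 dom22 T22 \<kappa> \<tau> y =
     inner (T11 y) y - \<kappa> * inner y y + inner (friedrichs_resolvent dom22 T22 \<tau> (T21 y)) (T21 y)"

definition ang_form2 :: "('b::real_inner \<Rightarrow> 'b) \<Rightarrow> real \<Rightarrow> 'b \<Rightarrow> real" where
  "ang_form2 T22 \<tau> y = \<tau> * inner y y - inner (T22 y) y"

text \<open>Graph of the angular extension T^\<bullet> = (I^*)^(-1) T I^(-1):
  pairs (I y, h) with y in D = D1 \<oplus> D2 (represented by a D-Cauchy sequence x in
  dom11 \<times> dom22 with H-limit I y) such that T y = I^* h, i.e. for every z in D
  (represented by a D-Cauchy sequence with H-limit w = I z), the value (T y)(z),
  which is the limit of (I^* T I x_n)(z) = <T x_n, w>, equals <h, w>.\<close>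
definition angular_ext ::
  "('a::real_inner \<Rightarrow> 'a) \<Rightarrow> ('b::real_inner \<Rightarrow> 'a) \<Rightarrow> ('a \<Rightarrow> 'b) \<Rightarrow> ('b \<Rightarrow> 'b) \<Rightarrow> 'a set \<Rightarrow> 'b set
    \<Rightarrow> real \<Rightarrow> real \<Rightarrow> (('a \<times> 'b) \<times> ('a \<times> 'b)) set" where
  "angular_ext T11 T12 T21 T22 dom11 dom22 \<kappa> \<tau> =
     (let q = (\<lambda>p. ang_form1 T11 T21 dom22 T22 \<kappa> \<tau> (fst p) + ang_form2 T22 \<tau> (snd p));
          Dm = dom11 \<times> dom22;
          Tc = block_op T11 T12 T21 T22
      in {(u, h). \<exists>x. form_cauchy q Dm x \<and> x \<longlonglongrightarrow> u \<and>
                   (\<forall>z w. form_cauchy q Dm z \<and> z \<longlonglongrightarrow> w \<longrightarrow>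
                          (\<lambda>n. inner (Tc (x n)) w) \<longlonglongrightarrow> inner h w)})"

end

theory Submission
  imports Defs
begin

locale frl =
  fixes D :: "'b::{real_inner,complete_space} set" and T :: "'b \<Rightarrow> 'b" and \<tau> :: real
  assumes sub: "subspace D"
    and add: "\<And>x y. x \<in> D \<Longrightarrow> y \<in> D \<Longrightarrow> T (x + y) = T x + T y"
    and scl: "\<And>c x. x \<in> D \<Longrightarrow> T (c *\<^sub>R x) = c *\<^sub>R T x"
    and sym: "\<And>x y. x \<in> D \<Longrightarrow> y \<in> D \<Longrightarrow> inner (T x) y = inner x (T y)"
    and pos: "\<And>y. y \<in> D \<Longrightarrow> inner y y \<le> \<tau> * inner y y - inner (T y) y"
begin

definition q2 where "q2 y = \<tau> * inner y y - inner (T y) y"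
definition bt where "bt y z = \<tau> * inner y z - inner (T y) z"

lemma inD: "x \<in> D \<Longrightarrow> y \<in> D \<Longrightarrow> s *\<^sub>R x + t *\<^sub>R y \<in> D"
  using sub by (simp add: subspace_def)

lemma diffD: "x \<in> D \<Longrightarrow> y \<in> D \<Longrightarrow> x - y \<in> D"
  using sub by (simp add: subspace_diff)

lemma q2_exp: assumes "a \<in> D" "c \<in> D"
  shows "q2 (s *\<^sub>R a + t *\<^sub>R c) = s^2 * q2 a + 2 * s * t * bt a c + t^2 * q2 c"
proof -
  have sa: "s *\<^sub>R a \<in> D" "t *\<^sub>R c \<in> D" using assms sub by (auto simp: subspace_def)
  have "T (s *\<^sub>R a + t *\<^sub>R c) = s *\<^sub>R T a + t *\<^sub>R T c"
    using add[OF sa] scl assms by simp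
  moreover have "inner (T c) a = inner (T a) c" using sym[OF assms(2,1)] by (simp add: inner_commute)
  ultimately show ?thesis
    by (simp add: q2_def bt_def inner_add_left inner_add_right power2_eq_square algebra_simps inner_commute)
qed

lemma q2_diff: assumes "a \<in> D" "c \<in> D" shows "q2 (a - c) = q2 a - 2 * bt a c + q2 c"
  using q2_exp[OF assms, of 1 "-1"] by simp

lemma q2_ge: "y \<in> D \<Longrightarrow> inner y y \<le> q2 y"
  using pos by (simp add: q2_def)

lemma q2_nonneg: "y \<in> D \<Longrightarrow> 0 \<le> q2 y"
  using q2_ge[of y] by (meson inner_ge_zero order_trans)

lemma bt_le: assumes "a \<in> D" "c \<in> D" shows "2 * bt a c \<le> q2 a + q2 c"
  using q2_diff[OF assms] q2_nonneg[OF diffD[OF assms]] by linarith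

lemma fcq: "form_completion_image (\<lambda>y. \<tau> * inner y y - inner (T y) y) D = form_completion_image q2 D"
  by (simp add: q2_def[abs_def])

lemma bt_cont: "(\<lambda>m. bt a (x m)) \<longlonglongrightarrow> bt a u" if "x \<longlonglongrightarrow> u"
  unfolding bt_def by (intro tendsto_intros that)

lemma fr_bound:
  assumes "(u, v) \<in> friedrichs_graph D T \<tau>" "\<tau> *\<^sub>R u - v = f"
  shows "inner u u \<le> 2 * inner u f"
proof -
  from assms(1) have a1: "(u, v) \<in> adjoint_graph D T"
    and a2: "u \<in> form_completion_image (\<lambda>y. \<tau> * inner y y - inner (T y) y) D"
    unfolding friedrichs_graph_def by blast+
  from a1 have adj: "\<forall>y\<in>D. inner (T y) u = inner y v" unfolding adjoint_graph_def by blast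
  from a2 have ui: "u \<in> form_completion_image q2 D" by (simp only: fcq)
  have v: "v = \<tau> *\<^sub>R u - f" unfolding assms(2)[symmetric] by simp
  have btu: "bt y u = inner y f" if "y \<in> D" for y
    using adj that by (simp add: bt_def v inner_diff_right)
  from ui obtain x where fc: "form_cauchy q2 D x" and lim: "x \<longlonglongrightarrow> u"
    by (auto simp: form_completion_image_def)
  have xD: "\<And>n. x n \<in> D" and cau: "\<And>e. e > 0 \<Longrightarrow> \<exists>N. \<forall>m\<ge>N. \<forall>n\<ge>N. q2 (x m - x n) < e"
    using fc by (auto simp: form_cauchy_def)
  have "inner u u - 2 * inner u f \<le> e" if e: "e > 0" for e
  proof -
    obtain N where N: "\<forall>m\<ge>N. \<forall>n\<ge>N. q2 (x m - x n) < e" using cau[OF e] by blast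
    have step: "inner (x n) (x n) - 2 * inner (x n) f \<le> e" if n: "n \<ge> N" for n
    proof -
      have "q2 (x n) \<le> e + 2 * bt (x n) u"
      proof (rule LIMSEQ_le_const)
        show "(\<lambda>m. e + 2 * bt (x n) (x m)) \<longlonglongrightarrow> e + 2 * bt (x n) u"
          by (intro tendsto_intros bt_cont lim)
        show "\<exists>M. \<forall>m\<ge>M. q2 (x n) \<le> e + 2 * bt (x n) (x m)"
        proof (intro exI allI impI)
          fix m assume m: "m \<ge> N"
          have d: "x n - x m \<in> D" using diffD xD by blast
          have "2 * bt (x n) (x n - x m) \<le> q2 (x n) + q2 (x n - x m)" by (rule bt_le[OF xD d])
          moreover have "bt (x n) (x n - x m) = q2 (x n) - bt (x n) (x m)"
            by (simp add: bt_def q2_def inner_diff_right algebra_simps)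
          moreover have "q2 (x n - x m) < e" using N n m by blast
          ultimately show "q2 (x n) \<le> e + 2 * bt (x n) (x m)" by linarith
        qed
      qed
      then show ?thesis using btu[OF xD] q2_ge[OF xD, of n] by (simp add: inner_commute)
    qed
    show ?thesis
    proof (rule LIMSEQ_le_const2[where X="\<lambda>n. inner (x n) (x n) - 2 * inner (x n) f"])
      show "(\<lambda>n. inner (x n) (x n) - 2 * inner (x n) f) \<longlonglongrightarrow> inner u u - 2 * inner u f"
        by (intro tendsto_intros lim)
      show "\<exists>N. \<forall>n\<ge>N. inner (x n) (x n) - 2 * inner (x n) f \<le> e" using step by blast
    qed
  qed
  then have "inner u u - 2 * inner u f \<le> 0" by (rule field_le_epsilon) simp
  then show ?thesis by simp
qed

lemma q2_diff_le: assumes "a \<in> D" "b \<in> D" shows "q2 (a - b) \<le> 2 * q2 a + 2 * q2 b"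
proof -
  have "0 \<le> q2 (1 *\<^sub>R a + 1 *\<^sub>R b)" using q2_nonneg inD[OF assms] by blast
  then show ?thesis using q2_exp[OF assms, of 1 1] q2_diff[OF assms] q2_nonneg[OF assms(1)] q2_nonneg[OF assms(2)] by simp
qed

lemma fci_diff:
  assumes "u1 \<in> form_completion_image q2 D" "u2 \<in> form_completion_image q2 D"
  shows "u1 - u2 \<in> form_completion_image q2 D"
proof -
  obtain x1 where f1: "form_cauchy q2 D x1" "x1 \<longlonglongrightarrow> u1" using assms(1) by (auto simp: form_completion_image_def)
  obtain x2 where f2: "form_cauchy q2 D x2" "x2 \<longlonglongrightarrow> u2" using assms(2) by (auto simp: form_completion_image_def)
  have D1: "\<And>n. x1 n \<in> D" and D2: "\<And>n. x2 n \<in> D" using f1 f2 by (auto simp: form_cauchy_def)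
  have "form_cauchy q2 D (\<lambda>n. x1 n - x2 n)"
    unfolding form_cauchy_def
  proof (intro conjI allI impI)
    fix n show "x1 n - x2 n \<in> D" using diffD D1 D2 by blast
  next
    fix e :: real assume e: "e > 0"
    have e4: "e/4 > 0" using e by simp
    obtain N1 where N1: "\<forall>m\<ge>N1. \<forall>n\<ge>N1. q2 (x1 m - x1 n) < e/4" using f1(1) e4 unfolding form_cauchy_def by blast
    obtain N2 where N2: "\<forall>m\<ge>N2. \<forall>n\<ge>N2. q2 (x2 m - x2 n) < e/4" using f2(1) e4 unfolding form_cauchy_def by blast
    show "\<exists>N. \<forall>m\<ge>N. \<forall>n\<ge>N. q2 (x1 m - x2 m - (x1 n - x2 n)) < e"
    proof (intro exI allI impI)
      fix m n assume m: "max N1 N2 \<le> m" and n: "max N1 N2 \<le> n"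
      have "q2 (x1 m - x2 m - (x1 n - x2 n)) = q2 ((x1 m - x1 n) - (x2 m - x2 n))" by (simp add: algebra_simps)
      moreover have "q2 ((x1 m - x1 n) - (x2 m - x2 n)) \<le> 2 * q2 (x1 m - x1 n) + 2 * q2 (x2 m - x2 n)"
        using q2_diff_le diffD D1 D2 by blast
      moreover have "q2 (x1 m - x1 n) < e/4" "q2 (x2 m - x2 n) < e/4" using N1 N2 m n by auto
      ultimately show "q2 (x1 m - x2 m - (x1 n - x2 n)) < e" by linarith
    qed
  qed
  moreover have "(\<lambda>n. x1 n - x2 n) \<longlonglongrightarrow> u1 - u2" using f1 f2 by (intro tendsto_intros)
  ultimately show ?thesis by (auto simp: form_completion_image_def)
qed

lemma fr_unique:
  assumes "(u1, v1) \<in> friedrichs_graph D T \<tau>" "\<tau> *\<^sub>R u1 - v1 = f"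
    and "(u2, v2) \<in> friedrichs_graph D T \<tau>" "\<tau> *\<^sub>R u2 - v2 = f"
  shows "u1 = u2"
proof -
  have "(u1 - u2, v1 - v2) \<in> friedrichs_graph D T \<tau>"
  proof -
    have "u1 \<in> form_completion_image q2 D" "u2 \<in> form_completion_image q2 D"
      using assms(1,3) unfolding friedrichs_graph_def fcq by blast+
    then have "u1 - u2 \<in> form_completion_image q2 D" by (rule fci_diff)
    moreover have "(u1, v1) \<in> adjoint_graph D T" "(u2, v2) \<in> adjoint_graph D T"
      using assms(1,3) unfolding friedrichs_graph_def by blast+
    then have "(u1 - u2, v1 - v2) \<in> adjoint_graph D T"
      unfolding adjoint_graph_def by (simp add: inner_diff_right)
    ultimately show ?thesis unfolding friedrichs_graph_def fcq by blast
  qed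
  moreover have "\<tau> *\<^sub>R (u1 - u2) - (v1 - v2) = 0"
    using assms(2,4) by (simp add: algebra_simps)
  ultimately have "inner (u1 - u2) (u1 - u2) \<le> 2 * inner (u1 - u2) 0" by (rule fr_bound)
  then have "inner (u1 - u2) (u1 - u2) \<le> 0" by simp
  then have "u1 - u2 = 0" by (metis inner_gt_zero_iff not_le)
  then show ?thesis by simp
qed

lemma fr_exists: "\<exists>u. (u, \<tau> *\<^sub>R u - f) \<in> friedrichs_graph D T \<tau>"
proof -
  define E where "E x = q2 x - 2 * inner x f" for x
  have Elow: "E x \<ge> - ((norm f)^2)" if "x \<in> D" for x
  proof -
    have "inner x f \<le> norm x * norm f" by (rule norm_cauchy_schwarz)
    moreover have "(norm x)^2 \<le> q2 x" using q2_ge[OF that] by (simp add: power2_norm_eq_inner)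
    moreover have "0 \<le> (norm x - norm f)^2" by simp
    ultimately show ?thesis unfolding E_def by (simp add: power2_eq_square algebra_simps)
  qed
  have D0: "0 \<in> D" using sub by (simp add: subspace_0)
  define m where "m = Inf (E ` D)"
  have bdd: "bdd_below (E ` D)" using Elow by (intro bdd_belowI[where m="- ((norm f)^2)"]) auto
  have mle: "m \<le> E x" if "x \<in> D" for x unfolding m_def using bdd that by (simp add: cInf_lower)
  have "\<exists>x\<in>D. E x < m + 1 / real (Suc n)" for n
  proof -
    have "Inf (E ` D) < m + 1 / real (Suc n)" unfolding m_def by simp
    then show ?thesis using D0 by (subst (asm) cInf_less_iff) (auto simp: bdd)
  qed
  then obtain x where xD: "\<And>n. x n \<in> D" and xE: "\<And>n. E (x n) < m + 1 / real (Suc n)"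
    by metis
  have mid: "q2 (a - c) \<le> 2 * E a + 2 * E c - 4 * m" if "a \<in> D" "c \<in> D" for a c
  proof -
    have h: "(1/2) *\<^sub>R a + (1/2) *\<^sub>R c \<in> D" using inD that by blast
    have "m \<le> E ((1/2) *\<^sub>R a + (1/2) *\<^sub>R c)" by (rule mle[OF h])
    have e1: "q2 ((1/2) *\<^sub>R a + (1/2) *\<^sub>R c) = q2 a / 4 + bt a c / 2 + q2 c / 4"
      using q2_exp[OF that, of "1/2" "1/2"] by (simp add: power2_eq_square)
    have e2: "inner ((1/2) *\<^sub>R a + (1/2) *\<^sub>R c) f = inner a f / 2 + inner c f / 2"
      by (simp add: inner_add_left)
    have m1: "m \<le> q2 a / 4 + bt a c / 2 + q2 c / 4 - inner a f - inner c f"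
      using \<open>m \<le> _\<close> e1 e2 unfolding E_def by simp
    show ?thesis using m1 q2_diff[OF that] unfolding E_def by simp
  qed
  have qc: "\<exists>N. \<forall>k\<ge>N. \<forall>n\<ge>N. q2 (x k - x n) < e" if e: "e > 0" for e
  proof -
    obtain N where N: "1 / real (Suc N) < e / 4"
      using reals_Archimedean[of "e/4"] e by (auto simp: inverse_eq_divide)
    show ?thesis
    proof (intro exI allI impI)
      fix k n assume k: "k \<ge> N" and n: "n \<ge> N"
      have "1 / real (Suc k) \<le> 1 / real (Suc N)" "1 / real (Suc n) \<le> 1 / real (Suc N)"
        using k n by (auto simp: frac_le)
      then show "q2 (x k - x n) < e" using mid[OF xD xD, of k n] xE[of k] xE[of n] N by linarith
    qed
  qed
  have "Cauchy x"
  proof (rule CauchyI)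
    fix e :: real assume e: "e > 0"
    have e2: "e^2 > 0" using e by simp
    obtain N where N: "\<forall>k\<ge>N. \<forall>n\<ge>N. q2 (x k - x n) < e^2" using qc[OF e2] by blast
    show "\<exists>M. \<forall>k\<ge>M. \<forall>n\<ge>M. norm (x k - x n) < e"
    proof (intro exI allI impI)
      fix k n assume "k \<ge> N" "n \<ge> N"
      then have "q2 (x k - x n) < e^2" using N by blast
      then have "(norm (x k - x n))^2 < e^2"
        using q2_ge[OF diffD[OF xD xD], of k n] by (simp add: power2_norm_eq_inner)
      then show "norm (x k - x n) < e" using e by (meson abs_le_square_iff less_le_not_le norm_ge_zero power2_less_imp_less)
    qed
  qed
  then obtain u where lim: "x \<longlonglongrightarrow> u" using Cauchy_convergent_iff convergent_def by blast
  have fc: "form_cauchy q2 D x" using xD qc by (simp add: form_cauchy_def)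
  have ui: "u \<in> form_completion_image q2 D" using fc lim by (auto simp: form_completion_image_def)
  have Etend: "(\<lambda>n. E (x n)) \<longlonglongrightarrow> m"
  proof (rule tendsto_sandwich[where f="\<lambda>_. m" and h="\<lambda>n. m + 1 / real (Suc n)"])
    show "\<forall>\<^sub>F n in sequentially. m \<le> E (x n)" using mle xD by simp
    show "\<forall>\<^sub>F n in sequentially. E (x n) \<le> m + 1 / real (Suc n)" using xE by (simp add: less_imp_le)
    show "(\<lambda>n. m) \<longlonglongrightarrow> m" by simp
    show "(\<lambda>n. m + 1 / real (Suc n)) \<longlonglongrightarrow> m"
      using tendsto_add[OF tendsto_const[of m] LIMSEQ_Suc[OF lim_inverse_n']] by (simp add: inverse_eq_divide)
  qed
  have adj: "inner (T y) u = inner y (\<tau> *\<^sub>R u - f)" if yD: "y \<in> D" for y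
  proof -
    define c where "c n = bt (x n) y - inner y f" for n
    define cl where "cl = \<tau> * inner u y - inner u (T y) - inner y f"
    have clim: "c \<longlonglongrightarrow> cl"
    proof -
      have ceq: "c = (\<lambda>n. \<tau> * inner (x n) y - inner (x n) (T y) - inner y f)"
        unfolding c_def bt_def using sym[OF xD yD] by (simp add: fun_eq_iff)
      show ?thesis unfolding ceq cl_def by (intro tendsto_intros lim)
    qed
    have ineq: "m \<le> m + 2 * t * cl + t^2 * q2 y" for t
    proof (rule LIMSEQ_le_const)
      show "(\<lambda>n. E (x n) + 2 * t * c n + t^2 * q2 y) \<longlonglongrightarrow> m + 2 * t * cl + t^2 * q2 y"
        by (intro tendsto_intros Etend clim)
      show "\<exists>N. \<forall>n\<ge>N. m \<le> E (x n) + 2 * t * c n + t^2 * q2 y"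
      proof (intro exI allI impI)
        fix n
        have "m \<le> E (1 *\<^sub>R x n + t *\<^sub>R y)" using mle inD[OF xD yD] by blast
        also have "E (1 *\<^sub>R x n + t *\<^sub>R y) = E (x n) + 2 * t * c n + t^2 * q2 y"
        proof -
          have "inner (1 *\<^sub>R x n + t *\<^sub>R y) f = inner (x n) f + t * inner y f"
            by (simp add: inner_add_left)
          then show ?thesis unfolding E_def c_def q2_exp[OF xD yD] by (simp add: algebra_simps)
        qed
        finally show "m \<le> E (x n) + 2 * t * c n + t^2 * q2 y" .
      qed
    qed
    have Q: "0 \<le> q2 y" by (rule q2_nonneg[OF yD])
    have "cl = 0"
    proof (rule ccontr)
      assume ne: "cl \<noteq> 0"
      define t where "t = - cl / (q2 y + 1)"
      have Q1: "q2 y + 1 > 0" using Q by simp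
      have tQ: "t * (q2 y + 1) = - cl" unfolding t_def using Q1 by simp
      have "0 \<le> 2 * t * cl + t^2 * q2 y" using ineq[of t] by simp
      also have "\<dots> \<le> 2 * t * cl + t^2 * (q2 y + 1)" by (simp add: distrib_left)
      also have "\<dots> = t * (2 * cl + t * (q2 y + 1))" by (simp add: power2_eq_square algebra_simps)
      also have "\<dots> = t * cl" using tQ by simp
      also have "\<dots> = - (cl * cl) / (q2 y + 1)" unfolding t_def by simp
      finally have "0 \<le> - (cl * cl) / (q2 y + 1)" .
      moreover have "cl * cl > 0" using ne not_real_square_gt_zero by blast
      ultimately show False using Q1 by (metis divide_pos_pos minus_divide_left neg_less_0_iff_less not_le)
    qed
    then have "inner (T y) u = \<tau> * inner y u - inner y f" unfolding cl_def by (simp add: inner_commute)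
    then show ?thesis by (simp add: inner_diff_right)
  qed
  have g1: "(u, \<tau> *\<^sub>R u - f) \<in> adjoint_graph D T" unfolding adjoint_graph_def using adj by simp
  have g2: "u \<in> form_completion_image (\<lambda>y. \<tau> * inner y y - inner (T y) y) D" using ui by (simp only: fcq)
  show ?thesis using g1 g2 unfolding friedrichs_graph_def by blast
qed

lemma fr_resolvent_bound: "inner (friedrichs_resolvent D T \<tau> f) f \<le> 2 * (norm f)^2"
proof -
  obtain u0 where u0: "(u0, \<tau> *\<^sub>R u0 - f) \<in> friedrichs_graph D T \<tau>" using fr_exists by blast
  have ex1: "\<exists>!u. \<exists>v. (u, v) \<in> friedrichs_graph D T \<tau> \<and> \<tau> *\<^sub>R u - v = f"
  proof (rule ex1I[of _ u0])
    show "\<exists>v. (u0, v) \<in> friedrichs_graph D T \<tau> \<and> \<tau> *\<^sub>R u0 - v = f" using u0 by auto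
    fix u assume "\<exists>v. (u, v) \<in> friedrichs_graph D T \<tau> \<and> \<tau> *\<^sub>R u - v = f"
    then obtain v where "(u, v) \<in> friedrichs_graph D T \<tau>" "\<tau> *\<^sub>R u - v = f" by blast
    then show "u = u0" using fr_unique[of u v f u0 "\<tau> *\<^sub>R u0 - f"] u0 by simp
  qed
  define R where "R = friedrichs_resolvent D T \<tau> f"
  have "\<exists>v. (R, v) \<in> friedrichs_graph D T \<tau> \<and> \<tau> *\<^sub>R R - v = f"
    unfolding R_def friedrichs_resolvent_def by (rule theI'[OF ex1])
  then obtain v where "(R, v) \<in> friedrichs_graph D T \<tau>" "\<tau> *\<^sub>R R - v = f" by blast
  then have b: "inner R R \<le> 2 * inner R f" by (rule fr_bound)
  have cs: "inner R f \<le> norm R * norm f" by (rule norm_cauchy_schwarz)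
  have "(norm R)^2 \<le> 2 * norm R * norm f" using b cs by (simp add: power2_norm_eq_inner)
  then have "norm R \<le> 2 * norm f"
    by (cases "norm R = 0", simp, simp add: power2_eq_square)
  then have "norm R * norm f \<le> 2 * norm f * norm f" by (simp add: mult_right_mono)
  then show ?thesis using cs unfolding R_def by (simp add: power2_eq_square)
qed

end

lemma cl_diff:
  assumes "complex_linear_on Ja Jb D T" "subspace D" "x \<in> D" "y \<in> D"
  shows "T (x - y) = T x - T y"
proof -
  have "(-1) *\<^sub>R y \<in> D" using subspace_scale[OF assms(2,4), of "-1"] by simp
  then have "T (x + (-1) *\<^sub>R y) = T x + T ((-1) *\<^sub>R y)" using assms unfolding complex_linear_on_def by blast
  moreover have "T ((-1) *\<^sub>R y) = (-1) *\<^sub>R T y" using assms unfolding complex_linear_on_def by blast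
  ultimately show ?thesis by simp
qed

lemma cl_zero:
  assumes "complex_linear_on Ja Jb D T" "subspace D"
  shows "T 0 = 0"
proof -
  have "0 \<in> D" using assms by (simp add: subspace_0)
  then have "T (0 *\<^sub>R 0) = 0 *\<^sub>R T 0" using assms unfolding complex_linear_on_def by blast
  then show ?thesis by simp
qed

theorem mainTheorem7:
  fixes T11 :: "'a::{real_inner,complete_space} \<Rightarrow> 'a"
    and T12 :: "'b::{real_inner,complete_space} \<Rightarrow> 'a"
    and T21 :: "'a \<Rightarrow> 'b"
    and T22 :: "'b \<Rightarrow> 'b"
    and dom11 :: "'a set" and dom22 :: "'b set"
    and J1 :: "'a \<Rightarrow> 'a" and J2 :: "'b \<Rightarrow> 'b"
    and \<kappa>' \<tau>' :: real
  assumes J1: "complex_structure J1" and J2: "complex_structure J2"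
    and dom11: "complex_subspace J1 dom11" and dom22: "complex_subspace J2 dom22"
    and lin11: "complex_linear_on J1 J1 dom11 T11"
    and lin12: "complex_linear_on J2 J1 dom22 T12"
    and lin21: "complex_linear_on J1 J2 dom11 T21"
    and lin22: "complex_linear_on J2 J2 dom22 T22"
    and sym: "symmetric_op (dom11 \<times> dom22) (block_op T11 T12 T21 T22)"
    and sym11: "symmetric_op dom11 T11"
    and sym22: "symmetric_op dom22 T22"
    and ess: "ess_selfadjoint (dom11 \<times> dom22) (block_op T11 T12 T21 T22)"
    and below: "bounded_below_op dom11 T11"
    and above: "bounded_above_op dom22 T22"
    and cases:
      "(ess_selfadjoint dom22 T22 \<and>
          (\<exists>\<gamma> \<kappa>. \<forall>y\<in>dom11. (norm (T21 y))\<^sup>2 \<le> \<gamma> * (inner (T11 y) y - \<kappa> * inner y y)))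
       \<or> (\<exists>\<gamma> \<kappa> \<tau>. (\<forall>y\<in>dom11. (norm (T21 y))\<^sup>2 \<le> \<gamma> * (inner (T11 y) y - \<kappa> * inner y y)) \<and>
                    (\<forall>y\<in>dom22. (norm (T12 y))\<^sup>2 \<le> \<gamma> * (\<tau> * inner y y - inner (T22 y) y)))
       \<or> (bounded_op dom11 T11 \<and> bounded_op dom22 T22)"
    and kappa': "\<forall>y\<in>dom11. inner y y \<le> inner (T11 y) y - \<kappa>' * inner y y"
    and tau': "\<forall>y\<in>dom22. inner y y \<le> \<tau>' * inner y y - inner (T22 y) y"
  shows "closure (op_graph (dom11 \<times> dom22) (block_op T11 T12 T21 T22))
           = angular_ext T11 T12 T21 T22 dom11 dom22 \<kappa>' \<tau>'"

proof -
  define Dm where "Dm = dom11 \<times> dom22"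
  define Tc where "Tc = block_op T11 T12 T21 T22"
  define q where "q = (\<lambda>p. ang_form1 T11 T21 dom22 T22 \<kappa>' \<tau>' (fst p) + ang_form2 T22 \<tau>' (snd p))"
  have s1: "subspace dom11" and s2: "subspace dom22"
    using dom11 dom22 unfolding complex_subspace_def by auto
  interpret F: frl dom22 T22 \<tau>'
  proof
    show "subspace dom22" by (rule s2)
    show "\<And>x y. x \<in> dom22 \<Longrightarrow> y \<in> dom22 \<Longrightarrow> T22 (x + y) = T22 x + T22 y"
      using lin22 unfolding complex_linear_on_def by blast
    show "\<And>c x. x \<in> dom22 \<Longrightarrow> T22 (c *\<^sub>R x) = c *\<^sub>R T22 x"
      using lin22 unfolding complex_linear_on_def by blast
    show "\<And>x y. x \<in> dom22 \<Longrightarrow> y \<in> dom22 \<Longrightarrow> inner (T22 x) y = inner x (T22 y)"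
      using sym22 unfolding symmetric_op_def by blast
    show "\<And>y. y \<in> dom22 \<Longrightarrow> inner y y \<le> \<tau>' * inner y y - inner (T22 y) y"
      using tau' by blast
  qed
  have AE: "angular_ext T11 T12 T21 T22 dom11 dom22 \<kappa>' \<tau>' =
     {(u, h). \<exists>x. form_cauchy q Dm x \<and> x \<longlonglongrightarrow> u \<and>
                   (\<forall>z w. form_cauchy q Dm z \<and> z \<longlonglongrightarrow> w \<longrightarrow>
                          (\<lambda>n. inner (Tc (x n)) w) \<longlonglongrightarrow> inner h w)}"
    unfolding angular_ext_def Let_def q_def Dm_def Tc_def by simp
  have symc: "\<And>a b. a \<in> Dm \<Longrightarrow> b \<in> Dm \<Longrightarrow> inner (Tc a) b = inner a (Tc b)"
    using sym unfolding symmetric_op_def Dm_def Tc_def by blast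
  have ESS: "closure (op_graph Dm Tc) = adjoint_graph Dm Tc"
    using ess unfolding ess_selfadjoint_def Dm_def Tc_def by blast
  have z12: "T12 0 = 0" by (rule cl_zero[OF lin12 s2])
  have z22: "T22 0 = 0" by (rule cl_zero[OF lin22 s2])
  have z11: "T11 0 = 0" by (rule cl_zero[OF lin11 s1])
  have z21: "T21 0 = 0" by (rule cl_zero[OF lin21 s1])
  have q0: "q 0 = 0" unfolding q_def ang_form1_def ang_form2_def by (simp add: z21)
  have Tcdiff: "Tc (a - b) = Tc a - Tc b" if "a \<in> Dm" "b \<in> Dm" for a b
  proof -
    have "fst a \<in> dom11" "fst b \<in> dom11" "snd a \<in> dom22" "snd b \<in> dom22"
      using that unfolding Dm_def by auto
    then show ?thesis unfolding Tc_def block_op_def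
      using cl_diff[OF lin11 s1] cl_diff[OF lin12 s2] cl_diff[OF lin21 s1] cl_diff[OF lin22 s2]
      by (simp add: algebra_simps)
  qed
  have Dmdiff: "a - b \<in> Dm" if "a \<in> Dm" "b \<in> Dm" for a b
    using that s1 s2 unfolding Dm_def by (auto simp: subspace_diff)
  have KEY: "\<exists>K. \<forall>d\<in>Dm. q d \<le> K * ((norm d)^2 + (norm (Tc d))^2)"
  proof -
    have cross: "inner (T12 d2) d1 = inner (T21 d1) d2" if "d1 \<in> dom11" "d2 \<in> dom22" for d1 d2
    proof -
      have p1: "(d1, 0) \<in> Dm" "(0, d2) \<in> Dm" using that s1 s2 by (auto simp: Dm_def subspace_0)
      have "inner (Tc (d1, 0)) (0, d2) = inner (d1, 0) (Tc (0, d2))" by (rule symc[OF p1])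
      then show ?thesis by (simp add: Tc_def block_op_def z11 z12 z21 z22 inner_commute)
    qed
    have Apos: "inner d1 d1 \<le> inner (T11 d1) d1 - \<kappa>' * inner d1 d1" if "d1 \<in> dom11" for d1
      using kappa' that by blast
    have Bpos: "inner d2 d2 \<le> \<tau>' * inner d2 d2 - inner (T22 d2) d2" if "d2 \<in> dom22" for d2
      using tau' that by blast
    have nP: "(norm (d1, d2))^2 = (norm d1)^2 + (norm d2)^2" for d1 :: 'a and d2 :: 'b
      by (simp add: norm_Pair)
    have C1: "\<exists>c1\<ge>0. \<forall>d1\<in>dom11. \<forall>d2\<in>dom22. (norm (T21 d1))^2 \<le>
       c1 * ((inner (T11 d1) d1 - \<kappa>' * inner d1 d1) + ((norm (d1, d2))^2 + (norm (Tc (d1, d2)))^2))"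
    proof -
      have "(\<exists>\<gamma> \<kappa>. \<forall>y\<in>dom11. (norm (T21 y))\<^sup>2 \<le> \<gamma> * (inner (T11 y) y - \<kappa> * inner y y))
            \<or> bounded_op dom22 T22" using cases by blast
      then show ?thesis
      proof
        assume "\<exists>\<gamma> \<kappa>. \<forall>y\<in>dom11. (norm (T21 y))\<^sup>2 \<le> \<gamma> * (inner (T11 y) y - \<kappa> * inner y y)"
        then obtain \<gamma> \<kappa> where G: "\<forall>y\<in>dom11. (norm (T21 y))\<^sup>2 \<le> \<gamma> * (inner (T11 y) y - \<kappa> * inner y y)"
          by blast
        show ?thesis
        proof (intro exI[of _ "\<bar>\<gamma>\<bar> * (1 + \<bar>\<kappa>' - \<kappa>\<bar>)"] conjI ballI)
          show "0 \<le> \<bar>\<gamma>\<bar> * (1 + \<bar>\<kappa>' - \<kappa>\<bar>)" by simp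
          fix d1 d2 assume d1: "d1 \<in> dom11" and d2: "d2 \<in> dom22"
          define A where "A = inner (T11 d1) d1 - \<kappa>' * inner d1 d1"
          define S where "S = (norm (d1, d2))^2 + (norm (Tc (d1, d2)))^2"
          define i where "i = inner d1 d1"
          have i0: "0 \<le> i" unfolding i_def by simp
          have A0: "0 \<le> A" using Apos[OF d1] i0 unfolding A_def i_def by linarith
          have iS: "i \<le> S" unfolding S_def i_def nP by (simp add: power2_norm_eq_inner)
          have S0: "0 \<le> S" unfolding S_def by simp
          have "(norm (T21 d1))^2 \<le> \<gamma> * (A + (\<kappa>' - \<kappa>) * i)"
            using G d1 unfolding A_def i_def by (simp add: algebra_simps)
          also have "\<dots> \<le> \<bar>\<gamma>\<bar> * \<bar>A + (\<kappa>' - \<kappa>) * i\<bar>" by (metis abs_ge_self abs_mult)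
          also have "\<dots> \<le> \<bar>\<gamma>\<bar> * (A + \<bar>\<kappa>' - \<kappa>\<bar> * S)"
          proof (rule mult_left_mono)
            have "\<bar>A + (\<kappa>' - \<kappa>) * i\<bar> \<le> \<bar>A\<bar> + \<bar>\<kappa>' - \<kappa>\<bar> * \<bar>i\<bar>"
              by (metis abs_mult abs_triangle_ineq)
            also have "\<dots> \<le> A + \<bar>\<kappa>' - \<kappa>\<bar> * S" using A0 i0 iS by (simp add: mult_left_mono)
            finally show "\<bar>A + (\<kappa>' - \<kappa>) * i\<bar> \<le> A + \<bar>\<kappa>' - \<kappa>\<bar> * S" .
          qed simp
          also have "\<dots> \<le> \<bar>\<gamma>\<bar> * ((1 + \<bar>\<kappa>' - \<kappa>\<bar>) * (A + S))"
          proof (rule mult_left_mono)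
            have "0 \<le> \<bar>\<kappa>' - \<kappa>\<bar> * A" using A0 by simp
            then show "A + \<bar>\<kappa>' - \<kappa>\<bar> * S \<le> (1 + \<bar>\<kappa>' - \<kappa>\<bar>) * (A + S)"
              using S0 by (simp add: algebra_simps)
          qed simp
          finally show "(norm (T21 d1))^2 \<le> \<bar>\<gamma>\<bar> * (1 + \<bar>\<kappa>' - \<kappa>\<bar>) *
            ((inner (T11 d1) d1 - \<kappa>' * inner d1 d1) + ((norm (d1, d2))^2 + (norm (Tc (d1, d2)))^2))"
            unfolding A_def S_def by (simp add: mult.assoc)
        qed
      next
        assume "bounded_op dom22 T22"
        then obtain C where C: "\<forall>y\<in>dom22. norm (T22 y) \<le> C * norm y" unfolding bounded_op_def by blast
        show ?thesis
        proof (intro exI[of _ "2 + 2 * C^2"] conjI ballI)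
          show "0 \<le> 2 + 2 * C^2" by simp
          fix d1 d2 assume d1: "d1 \<in> dom11" and d2: "d2 \<in> dom22"
          define a where "a = norm (Tc (d1, d2))"
          define b where "b = norm (d1, d2)"
          have a0: "0 \<le> a" "0 \<le> b" unfolding a_def b_def by auto
          have A0: "0 \<le> inner (T11 d1) d1 - \<kappa>' * inner d1 d1"
            using Apos[OF d1] by (smt (verit) inner_ge_zero)
          have f: "T21 d1 = snd (Tc (d1, d2)) - T22 d2" unfolding Tc_def block_op_def by simp
          have "norm (T21 d1) \<le> norm (snd (Tc (d1, d2))) + norm (T22 d2)"
            unfolding f by (rule norm_triangle_ineq4)
          also have "norm (snd (Tc (d1, d2))) \<le> a" unfolding a_def
            by (metis norm_snd_le prod.collapse)
          also have "norm (T22 d2) \<le> \<bar>C\<bar> * b"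
          proof -
            have "norm (T22 d2) \<le> C * norm d2" using C d2 by blast
            also have "\<dots> \<le> \<bar>C\<bar> * norm d2" by (simp add: mult_right_mono)
            also have "\<dots> \<le> \<bar>C\<bar> * b" unfolding b_def by (intro mult_left_mono norm_snd_le) simp
            finally show ?thesis .
          qed
          finally have nf: "norm (T21 d1) \<le> a + \<bar>C\<bar> * b" by simp
          have "(norm (T21 d1))^2 \<le> (a + \<bar>C\<bar> * b)^2" using nf by (intro power_mono) auto
          also have "\<dots> \<le> 2 * a^2 + 2 * C^2 * b^2"
          proof -
            have "0 \<le> (a - \<bar>C\<bar> * b)^2" by simp
            then show ?thesis by (simp add: power2_eq_square algebra_simps)
          qed
          also have "\<dots> \<le> (2 + 2 * C^2) * (b^2 + a^2)"
            by (simp add: algebra_simps)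
          also have "\<dots> \<le> (2 + 2 * C^2) * ((inner (T11 d1) d1 - \<kappa>' * inner d1 d1) + (b^2 + a^2))"
            using A0 by (intro mult_left_mono) auto
          finally show "(norm (T21 d1))^2 \<le> (2 + 2 * C^2) *
            ((inner (T11 d1) d1 - \<kappa>' * inner d1 d1) + ((norm (d1, d2))^2 + (norm (Tc (d1, d2)))^2))"
            unfolding a_def b_def by (simp add: add.commute)
        qed
      qed
    qed
    then obtain c1 where c10: "c1 \<ge> 0" and c1: "\<forall>d1\<in>dom11. \<forall>d2\<in>dom22. (norm (T21 d1))^2 \<le>
       c1 * ((inner (T11 d1) d1 - \<kappa>' * inner d1 d1) + ((norm (d1, d2))^2 + (norm (Tc (d1, d2)))^2))"
      by blast
    define c0 where "c0 = 1 + \<bar>\<kappa>'\<bar> + \<bar>\<tau>'\<bar>"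
    show ?thesis
    proof (intro exI[of _ "c0 + 2 * c1 * (c0 + 1)"] ballI)
      fix d assume dD: "d \<in> Dm"
      obtain d1 d2 where dd: "d = (d1, d2)" by (cases d)
      have d1: "d1 \<in> dom11" and d2: "d2 \<in> dom22" using dD dd unfolding Dm_def by auto
      define A where "A = inner (T11 d1) d1 - \<kappa>' * inner d1 d1"
      define B where "B = \<tau>' * inner d2 d2 - inner (T22 d2) d2"
      define S where "S = (norm (d1, d2))^2 + (norm (Tc (d1, d2)))^2"
      define N where "N = norm (d1, d2)"
      define M where "M = norm (Tc (d1, d2))"
      have A0: "0 \<le> A" using Apos[OF d1] unfolding A_def by (smt (verit) inner_ge_zero)
      have B0: "0 \<le> B" using Bpos[OF d2] unfolding B_def by (smt (verit) inner_ge_zero)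
      have S0: "0 \<le> S" unfolding S_def by simp
      have i1: "inner d1 d1 \<le> S" "inner d2 d2 \<le> S" unfolding S_def nP by (simp_all add: power2_norm_eq_inner)
      have i0: "0 \<le> inner d1 d1" "0 \<le> inner d2 d2" by simp_all
      have AB: "A + B = inner (Tc (d1, d2)) (d1, - d2) - \<kappa>' * inner d1 d1 + \<tau>' * inner d2 d2"
        unfolding A_def B_def Tc_def block_op_def using cross[OF d1 d2]
        by (simp add: inner_add_left inner_minus_right algebra_simps)
      have "inner (Tc (d1, d2)) (d1, - d2) \<le> M * N"
        using norm_cauchy_schwarz[of "Tc (d1, d2)" "(d1, - d2)"] unfolding M_def N_def by (simp add: norm_Pair)
      also have "M * N \<le> S"
      proof -
        have "0 \<le> (M - N)^2" by simp
        then have "2 * (M * N) \<le> M * M + N * N" by (simp add: power2_eq_square algebra_simps)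
        moreover have "0 \<le> M * N" unfolding M_def N_def by simp
        ultimately show ?thesis unfolding S_def M_def[symmetric] N_def[symmetric] by (simp add: power2_eq_square)
      qed
      finally have ip: "inner (Tc (d1, d2)) (d1, - d2) \<le> S" .
      have k1: "- \<kappa>' * inner d1 d1 \<le> \<bar>\<kappa>'\<bar> * S"
      proof -
        have "- \<kappa>' * inner d1 d1 \<le> \<bar>\<kappa>'\<bar> * inner d1 d1" using i0 by (intro mult_right_mono) auto
        also have "\<dots> \<le> \<bar>\<kappa>'\<bar> * S" using i1 by (intro mult_left_mono) auto
        finally show ?thesis .
      qed
      have k2: "\<tau>' * inner d2 d2 \<le> \<bar>\<tau>'\<bar> * S"
      proof -
        have "\<tau>' * inner d2 d2 \<le> \<bar>\<tau>'\<bar> * inner d2 d2" using i0 by (intro mult_right_mono) auto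
        also have "\<dots> \<le> \<bar>\<tau>'\<bar> * S" using i1 by (intro mult_left_mono) auto
        finally show ?thesis .
      qed
      have ABS: "A + B \<le> c0 * S" using AB ip k1 k2 unfolding c0_def by (simp add: algebra_simps)
      have Rt: "inner (friedrichs_resolvent dom22 T22 \<tau>' (T21 d1)) (T21 d1) \<le> 2 * (norm (T21 d1))^2"
        by (rule F.fr_resolvent_bound)
      have f2: "(norm (T21 d1))^2 \<le> c1 * (A + S)" using c1 d1 d2 unfolding A_def S_def by blast
      have "c1 * (A + S) \<le> c1 * ((c0 + 1) * S)"
        using ABS B0 c10 by (intro mult_left_mono) (auto simp: algebra_simps)
      with f2 have f3: "(norm (T21 d1))^2 \<le> c1 * (c0 + 1) * S" by (simp add: mult.assoc)
      have qd: "q d = A + inner (friedrichs_resolvent dom22 T22 \<tau>' (T21 d1)) (T21 d1) + B"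
        unfolding q_def dd A_def B_def ang_form1_def ang_form2_def by simp
      have "q d \<le> c0 * S + 2 * (c1 * (c0 + 1) * S)" using qd ABS Rt f3 by linarith
      also have "\<dots> = (c0 + 2 * c1 * (c0 + 1)) * S" by (simp add: algebra_simps)
      finally show "q d \<le> (c0 + 2 * c1 * (c0 + 1)) * ((norm d)^2 + (norm (Tc d))^2)"
        unfolding S_def dd .
    qed
  qed
  have sub1: "angular_ext T11 T12 T21 T22 dom11 dom22 \<kappa>' \<tau>' \<subseteq> closure (op_graph Dm Tc)"
  proof
    fix uh assume "uh \<in> angular_ext T11 T12 T21 T22 dom11 dom22 \<kappa>' \<tau>'"
    then obtain u h x where uh: "uh = (u, h)" and fc: "form_cauchy q Dm x" and lim: "x \<longlonglongrightarrow> u"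
      and W: "\<And>z w. form_cauchy q Dm z \<Longrightarrow> z \<longlonglongrightarrow> w \<Longrightarrow> (\<lambda>n. inner (Tc (x n)) w) \<longlonglongrightarrow> inner h w"
      unfolding AE by blast
    have xD: "\<And>n. x n \<in> Dm" using fc unfolding form_cauchy_def by blast
    have "inner (Tc p) u = inner p h" if p: "p \<in> Dm" for p
    proof -
      have "form_cauchy q Dm (\<lambda>n. p)" unfolding form_cauchy_def using p q0 by auto
      then have l1: "(\<lambda>n. inner (Tc (x n)) p) \<longlonglongrightarrow> inner h p" using W by blast
      have "(\<lambda>n. inner (x n) (Tc p)) \<longlonglongrightarrow> inner u (Tc p)" by (intro tendsto_intros lim)
      moreover have "(\<lambda>n. inner (x n) (Tc p)) = (\<lambda>n. inner (Tc (x n)) p)" using symc[OF xD p] by simp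
      ultimately have "(\<lambda>n. inner (Tc (x n)) p) \<longlonglongrightarrow> inner u (Tc p)" by simp
      with l1 have "inner h p = inner u (Tc p)" by (rule LIMSEQ_unique)
      then show ?thesis by (simp add: inner_commute)
    qed
    then have "(u, h) \<in> adjoint_graph Dm Tc" unfolding adjoint_graph_def by blast
    then show "uh \<in> closure (op_graph Dm Tc)" using ESS uh by simp
  qed
  have sub2: "closure (op_graph Dm Tc) \<subseteq> angular_ext T11 T12 T21 T22 dom11 dom22 \<kappa>' \<tau>'"
  proof
    fix uh assume "uh \<in> closure (op_graph Dm Tc)"
    then obtain S where S: "\<And>n. S n \<in> op_graph Dm Tc" and Sl: "S \<longlonglongrightarrow> uh"
      unfolding closure_sequential by blast
    obtain u h where uh: "uh = (u, h)" by (cases uh)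
    define x where "x n = fst (S n)" for n
    have xD: "\<And>n. x n \<in> Dm" and Sx: "\<And>n. snd (S n) = Tc (x n)"
    proof -
      fix n
      from S[of n] obtain a where "S n = (a, Tc a)" "a \<in> Dm" unfolding op_graph_def by blast
      then show "x n \<in> Dm" "snd (S n) = Tc (x n)" unfolding x_def by auto
    qed
    have lim: "x \<longlonglongrightarrow> u" unfolding x_def using tendsto_fst[OF Sl] uh by simp
    have limT: "(\<lambda>n. Tc (x n)) \<longlonglongrightarrow> h" using tendsto_snd[OF Sl] uh Sx by simp
    obtain K where K: "\<forall>d\<in>Dm. q d \<le> K * ((norm d)^2 + (norm (Tc d))^2)" using KEY by blast
    have fc: "form_cauchy q Dm x"
      unfolding form_cauchy_def
    proof (intro conjI allI impI)
      fix n show "x n \<in> Dm" by (rule xD)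
    next
      fix e :: real assume e: "e > 0"
      define K' where "K' = max K 0"
      define \<delta> where "\<delta> = sqrt (e / (2 * K' + 2))"
      have K'0: "K' \<ge> 0" unfolding K'_def by simp
      have dpos: "\<delta> > 0" unfolding \<delta>_def using e K'0 by simp
      have d2: "\<delta>^2 = e / (2 * K' + 2)" unfolding \<delta>_def using e K'0 by simp
      obtain M1 where M1: "\<forall>m\<ge>M1. \<forall>n\<ge>M1. norm (x m - x n) < \<delta>"
        using CauchyD[OF LIMSEQ_imp_Cauchy[OF lim] dpos] by blast
      obtain M2 where M2: "\<forall>m\<ge>M2. \<forall>n\<ge>M2. norm (Tc (x m) - Tc (x n)) < \<delta>"
        using CauchyD[OF LIMSEQ_imp_Cauchy[OF limT] dpos] by blast
      show "\<exists>N. \<forall>m\<ge>N. \<forall>n\<ge>N. q (x m - x n) < e"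
      proof (intro exI allI impI)
        fix m n assume m: "max M1 M2 \<le> m" and n: "max M1 M2 \<le> n"
        have a1: "norm (x m - x n) < \<delta>" using M1 m n by auto
        have a2: "norm (Tc (x m - x n)) < \<delta>" using M2 m n Tcdiff[OF xD xD] by auto
        have b1: "(norm (x m - x n))^2 \<le> \<delta>^2" using a1 by (intro power_mono) auto
        have b2: "(norm (Tc (x m - x n)))^2 \<le> \<delta>^2" using a2 by (intro power_mono) auto
        have "q (x m - x n) \<le> K * ((norm (x m - x n))^2 + (norm (Tc (x m - x n)))^2)"
          using K Dmdiff[OF xD xD] by blast
        also have "\<dots> \<le> K' * ((norm (x m - x n))^2 + (norm (Tc (x m - x n)))^2)"
          unfolding K'_def by (intro mult_right_mono) auto
        also have "\<dots> \<le> K' * (2 * \<delta>^2)"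
          using b1 b2 K'0 by (intro mult_left_mono) auto
        also have "\<dots> = 2 * K' * e / (2 * K' + 2)" using d2 by simp
        also have "\<dots> < e" using e K'0 by (simp add: field_simps)
        finally show "q (x m - x n) < e" .
      qed
    qed
    have "\<forall>z w. form_cauchy q Dm z \<and> z \<longlonglongrightarrow> w \<longrightarrow> (\<lambda>n. inner (Tc (x n)) w) \<longlonglongrightarrow> inner h w"
      using limT by (auto intro: tendsto_intros)
    then show "uh \<in> angular_ext T11 T12 T21 T22 dom11 dom22 \<kappa>' \<tau>'"
      unfolding AE uh using fc lim by blast
  qed
  show ?thesis using sub1 sub2 unfolding Dm_def Tc_def by blast
qed

end
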